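(* Let $\mathcal{G}=(\mathcal{V},\mathcal{E})$ be a directed graph with $n$ nodes, $m$ edges and terminals $s,t$, let $f:2^{\mathcal{E}}\to\mathbb{R}_+$ be normalized, monotone nondecreasing and submodular with Lovász extension $\tilde f$, and let $C^*$ be an $(s,t)$-cut minimizing $f$. Let $(x^*,y^* )$ be an optimal solution of the relaxation $$\min_{y\in\mathbb{R}^{\mathcal{E}},x\in\mathbb{R}^{\mathcal{V}}}\tilde f(y)\ \text{ s.t. } -x(u)+x(v)+y(e)\ge 0\ \forall e=(u,v)\in\mathcal{E},\ x(s)-x(t)\ge1,\ y\ge0,$$ with $x^*\in[0,1]^n$, $y^*\in[0,1]^m$. Order the edges so that $y^*(e_1)\ge\dots\ge y^*(e_m)$; for $i=1,\dots,m$ let $C_i=\{e_j: y^*(e_j)\ge y^*(e_i)\}$, and at the first $i$ for which $C_i$ is an $(s,t)$-cut, prune $C_i$ to a minimal $(s,t)$-cut $\widehat C\subseteq C_i$ and return it; let $\theta=y^*(e_i)$ for this $i$. Then $$f(\widehat C)\le\frac1\theta f(C^* )\le |P_{\max}|\,f(C^* )\le (n-1)f(C^* ),$$ where $P_{\max}$ is a longest simple $(s,t)$-path in $\mathcal{G}$ and $|P_{\max}|$ its number of edges.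
   Context: An $(s,t)$-cut is a set of edges whose removal disconnects all $s$-$t$ paths; it is minimal if no proper subset is a cut. The Lovász extension: for $x\in[0,1]^m$ written uniquely as $x=\sum_j\lambda_j\chi_{B_j}$ with $\lambda_j>0$ and nested level sets $B_1\subset B_2\subset\cdots$, $\tilde f(x)=\sum_j\lambda_j f(B_j)$, where $\chi_B$ is the indicator vector of $B$. *)

theory Defs
  imports Complex_Main
begin

text \<open>A directed graph is given by a finite vertex set V and an edge set
  E \<subseteq> V \<times> V; an edge e = (u,v) goes from u to v.
  A path is represented by its vertex list.\<close>

definition path_edges :: "'v list \<Rightarrow> ('v \<times> 'v) list" where
  "path_edges p = zip p (tl p)"

definition simple_st_path :: "('v \<times> 'v) set \<Rightarrow> 'v \<Rightarrow> 'v \<Rightarrow> 'v list \<Rightarrow> bool" where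
  "simple_st_path E s t p \<longleftrightarrow> p \<noteq> [] \<and> hd p = s \<and> last p = t \<and> distinct p
     \<and> set (path_edges p) \<subseteq> E"

definition is_st_cut :: "('v \<times> 'v) set \<Rightarrow> 'v \<Rightarrow> 'v \<Rightarrow> ('v \<times> 'v) set \<Rightarrow> bool" where
  "is_st_cut E s t C \<longleftrightarrow> C \<subseteq> E \<and>
     (\<forall>p. simple_st_path E s t p \<longrightarrow> set (path_edges p) \<inter> C \<noteq> {})"

definition is_minimal_st_cut :: "('v \<times> 'v) set \<Rightarrow> 'v \<Rightarrow> 'v \<Rightarrow> ('v \<times> 'v) set \<Rightarrow> bool" where
  "is_minimal_st_cut E s t C \<longleftrightarrow> is_st_cut E s t C \<and>
     (\<forall>D. D \<subset> C \<longrightarrow> \<not> is_st_cut E s t D)"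

definition normalized :: "('e set \<Rightarrow> real) \<Rightarrow> bool" where
  "normalized f \<longleftrightarrow> f {} = 0"

definition nonneg_on :: "'e set \<Rightarrow> ('e set \<Rightarrow> real) \<Rightarrow> bool" where
  "nonneg_on E f \<longleftrightarrow> (\<forall>A. A \<subseteq> E \<longrightarrow> 0 \<le> f A)"

definition monotone_set_fun :: "'e set \<Rightarrow> ('e set \<Rightarrow> real) \<Rightarrow> bool" where
  "monotone_set_fun E f \<longleftrightarrow> (\<forall>A B. A \<subseteq> B \<and> B \<subseteq> E \<longrightarrow> f A \<le> f B)"

definition submodular :: "'e set \<Rightarrow> ('e set \<Rightarrow> real) \<Rightarrow> bool" where
  "submodular E f \<longleftrightarrow> (\<forall>A B. A \<subseteq> E \<and> B \<subseteq> E \<longrightarrow> f (A \<union> B) + f (A \<inter> B) \<le> f A + f B)"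

text \<open>Lovasz extension: with v_1 > v_2 > ... > v_k > 0 the distinct positive values
  of y on E, B_j = {e. y e \<ge> v_j} (nested), \<lambda>_j = v_j - v_{j+1} (v_{k+1} = 0),
  we have y = \<Sum>_j \<lambda>_j \<chi>_{B_j} and the extension is \<Sum>_j \<lambda>_j f(B_j).\<close>
definition lovasz_ext :: "'e set \<Rightarrow> ('e set \<Rightarrow> real) \<Rightarrow> ('e \<Rightarrow> real) \<Rightarrow> real" where
  "lovasz_ext E f y =
    (let Vs = {v \<in> y ` E. 0 < v}
     in \<Sum>v\<in>Vs. (v - Max (insert 0 {w \<in> Vs. w < v})) * f {e \<in> E. v \<le> y e})"

definition relax_feasible :: "('v \<times> 'v) set \<Rightarrow> 'v \<Rightarrow> 'v \<Rightarrow> ('v \<Rightarrow> real) \<Rightarrow> (('v \<times> 'v) \<Rightarrow> real) \<Rightarrow> bool" where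
  "relax_feasible E s t x y \<longleftrightarrow>
     (\<forall>u v. (u, v) \<in> E \<longrightarrow> - x u + x v + y (u, v) \<ge> 0) \<and>
     x s - x t \<ge> 1 \<and> (\<forall>e\<in>E. y e \<ge> 0)"

end

theory Submission imports Defs begin

lemma pe_app: "xs \<noteq> [] \<Longrightarrow> ys \<noteq> [] \<Longrightarrow>
  path_edges (xs @ ys) = path_edges xs @ (last xs, hd ys) # path_edges ys"
proof (induction xs)
  case Nil then show ?case by simp
next
  case (Cons a xs)
  show ?case
  proof (cases "xs = []")
    case True then show ?thesis using Cons.prems by (cases ys) (auto simp: path_edges_def)
  next
    case False
    then obtain b zs where xs: "xs = b # zs" by (cases xs) auto
    from Cons.IH[OF False Cons.prems(2)] show ?thesis by (simp add: path_edges_def xs)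
  qed
qed

lemma tele:
  fixes S :: "real set"
  assumes "finite S" "\<forall>v\<in>S. 0<v" "a\<in>S"
  shows "(\<Sum>v\<in>{v\<in>S. v\<le>a}. v - Max(insert 0 {w\<in>S. w<v})) = a"
  using assms(3)
proof (induction "card {w\<in>S. w<a}" arbitrary: a rule: less_induct)
  case less
  show ?case
  proof (cases "{w\<in>S. w<a} = {}")
    case True
    then have "{v\<in>S. v\<le>a} = {a}" using less.prems by force
    moreover have "Max(insert 0 {w\<in>S. w<a}) = 0" unfolding True by simp
    ultimately show ?thesis by simp
  next
    case False
    define b where "b = Max {w\<in>S. w<a}"
    have fin: "finite {w\<in>S. w<a}" using assms(1) by simp
    have bin: "b \<in> {w\<in>S. w<a}" unfolding b_def using Max_in[OF fin False] .
    have bmax: "\<And>w. w\<in>S \<Longrightarrow> w<a \<Longrightarrow> w \<le> b" unfolding b_def using fin by auto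
    have bpos: "0 < b" using bin assms(2) by auto
    have prev: "Max(insert 0 {w\<in>S. w<a}) = b"
      using Max_insert[OF fin False] bpos unfolding b_def[symmetric] by simp
    have split: "{v\<in>S. v\<le>a} = insert a {v\<in>S. v\<le>b}"
      using bin bmax less.prems by force
    have anot: "a \<notin> {v\<in>S. v\<le>b}" using bin by auto
    have "{w\<in>S. w<b} \<subset> {w\<in>S. w<a}" using bin by auto
    then have lt: "card {w\<in>S. w<b} < card {w\<in>S. w<a}" using fin psubset_card_mono by blast
    have IH: "(\<Sum>v\<in>{v\<in>S. v\<le>b}. v - Max(insert 0 {w\<in>S. w<v})) = b"
      using less.hyps[OF lt] bin by auto
    have "(\<Sum>v\<in>{v\<in>S. v\<le>a}. v - Max(insert 0 {w\<in>S. w<v}))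
       = (a - Max(insert 0 {w\<in>S. w<a})) + (\<Sum>v\<in>{v\<in>S. v\<le>b}. v - Max(insert 0 {w\<in>S. w<v}))"
      unfolding split using anot assms(1) by (subst sum.insert) auto
    then show ?thesis using IH prev by simp
  qed
qed

lemma walk:
  assumes "p \<noteq> []" "set (path_edges p) \<subseteq> E" "\<forall>u v. (u,v)\<in>E \<longrightarrow> - x u + x v + y (u, v) \<ge> (0::real)"
  shows "x (hd p) - x (last p) \<le> sum_list (map y (path_edges p))"
  using assms(1,2)
proof (induction p)
  case Nil then show ?case by simp
next
  case (Cons a p)
  show ?case
  proof (cases "p = []")
    case True then show ?thesis by (simp add: path_edges_def)
  next
    case False
    then obtain b q where p: "p = b # q" by (cases p) auto
    have pe: "path_edges (a # p) = (a, b) # path_edges p" by (simp add: path_edges_def p)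
    have "set (path_edges p) \<subseteq> E" "(a,b) \<in> E" using Cons.prems(2) pe by auto
    have "x a - x b \<le> y (a,b)" using assms(3) \<open>(a,b)\<in>E\<close> by force
    moreover have "sum_list (map y (path_edges (a#p))) = y(a,b) + sum_list (map y (path_edges p))"
      using pe by simp
    moreover have "last (a#p) = last p" "hd p = b" using p by auto
    ultimately show ?thesis using Cons.IH[OF False \<open>set (path_edges p) \<subseteq> E\<close>] by simp
  qed
qed

lemma sl_bound: "\<forall>e\<in>set l. y e \<le> (th::real) \<Longrightarrow> sum_list (map y l) \<le> real (length l) * th"
  by (induction l) (auto simp: algebra_simps)


lemma extend_path:
  assumes p: "simple_st_path D s u p" and e: "(u,v) \<in> D"
  shows "\<exists>q. simple_st_path D s v q"
proof (cases "v \<in> set p")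
  case True
  then obtain as bs where pd: "p = as @ v # bs" by (meson split_list)
  have d: "distinct (as @ [v])" using p pd by (auto simp: simple_st_path_def)
  have h: "hd (as @ [v]) = s" using p pd by (cases as) (auto simp: simple_st_path_def)
  have "set (path_edges (as @ [v])) \<subseteq> set (path_edges p)"
  proof (cases "bs = []")
    case True then show ?thesis using pd by simp
  next
    case False
    have "p = (as @ [v]) @ bs" using pd by simp
    then show ?thesis using pe_app[of "as@[v]" bs] False by auto
  qed
  then have "simple_st_path D s v (as @ [v])" using p d h by (auto simp: simple_st_path_def)
  then show ?thesis by blast
next
  case False
  have "path_edges (p @ [v]) = path_edges p @ [(u, v)]"
    using pe_app[of p "[v]"] p by (simp add: simple_st_path_def path_edges_def)
  then have "simple_st_path D s v (p @ [v])" using p e False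
    by (auto simp: simple_st_path_def)
  then show ?thesis by blast
qed

lemma set_path_sub: "p \<noteq> [] \<Longrightarrow> set p \<subseteq> insert (hd p) (snd ` set (path_edges p))"
proof (induction p)
  case Nil then show ?case by simp
next
  case (Cons a p)
  show ?case
  proof (cases "p = []")
    case True then show ?thesis by simp
  next
    case False
    then obtain b q where p: "p = b # q" by (cases p) auto
    have pe: "path_edges (a # p) = (a, b) # path_edges p" by (simp add: path_edges_def p)
    show ?thesis using Cons.IH[OF False] pe p by auto
  qed
qed

theorem lemma9:
  fixes V :: "'v set" and E :: "('v \<times> 'v) set" and s t :: 'v
    and f :: "('v \<times> 'v) set \<Rightarrow> real"
    and Cstar Chat :: "('v \<times> 'v) set"
    and xs :: "'v \<Rightarrow> real" and ys :: "('v \<times> 'v) \<Rightarrow> real"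
    and es :: "('v \<times> 'v) list" and i :: nat
    and Pmax :: "'v list"
  assumes finV: "finite V" and EV: "E \<subseteq> V \<times> V"
    and sV: "s \<in> V" and tV: "t \<in> V" and st: "s \<noteq> t"
    and f_norm: "normalized f" and f_nonneg: "nonneg_on E f"
    and f_mono: "monotone_set_fun E f" and f_sub: "submodular E f"
    and Cstar_cut: "is_st_cut E s t Cstar"
    and Cstar_min: "\<forall>C. is_st_cut E s t C \<longrightarrow> f Cstar \<le> f C"
    and opt_feas: "relax_feasible E s t xs ys"
    and opt_min: "\<forall>x y. relax_feasible E s t x y \<longrightarrow> lovasz_ext E f ys \<le> lovasz_ext E f y"
    and xs_01: "\<forall>v\<in>V. 0 \<le> xs v \<and> xs v \<le> 1"
    and ys_01: "\<forall>e\<in>E. 0 \<le> ys e \<and> ys e \<le> 1"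
    and es_enum: "distinct es" "set es = E"
    and es_sorted: "sorted_wrt (\<lambda>a b. ys a \<ge> ys b) es"
    and i_range: "i < length es"
    and i_cut: "is_st_cut E s t {e \<in> E. ys e \<ge> ys (es ! i)}"
    and i_first: "\<forall>j<i. \<not> is_st_cut E s t {e \<in> E. ys e \<ge> ys (es ! j)}"
    and Chat_sub: "Chat \<subseteq> {e \<in> E. ys e \<ge> ys (es ! i)}"
    and Chat_min: "is_minimal_st_cut E s t Chat"
    and Pmax_path: "simple_st_path E s t Pmax"
    and Pmax_longest: "\<forall>p. simple_st_path E s t p \<longrightarrow> length p \<le> length Pmax"
  shows "f Chat \<le> (1 / ys (es ! i)) * f Cstar \<and>
         (1 / ys (es ! i)) * f Cstar \<le> real (length (path_edges Pmax)) * f Cstar \<and>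
         real (length (path_edges Pmax)) * f Cstar \<le> (real (card V) - 1) * f Cstar"
proof -
  define th where "th = ys (es ! i)"
  define L where "L = length (path_edges Pmax)"
  have finE: "finite E" using finV EV finite_subset by blast
  have CsE: "Cstar \<subseteq> E" using Cstar_cut by (simp add: is_st_cut_def)
  have fCs: "0 \<le> f Cstar" using f_nonneg CsE by (simp add: nonneg_on_def)
  have esiE: "es ! i \<in> E" using i_range es_enum by auto
  have le_th: "ys e \<le> th" if "e \<in> E" "\<not> (\<exists>k<i. es ! k = e)" for e
  proof -
    have "e \<in> set es" using that(1) es_enum(2) by simp
    then obtain k where k: "k < length es" "es ! k = e" by (auto simp: in_set_conv_nth)
    have "i \<le> k"
    proof (rule ccontr)
      assume "\<not> i \<le> k" then have "k < i" by simp
      with k that(2) show False by blast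
    qed
    then show ?thesis
      using sorted_wrt_nth_less[OF es_sorted, of i k] k i_range unfolding th_def
      by (cases "i = k") auto
  qed
  have notcut: "\<not> is_st_cut E s t {e\<in>E. th < ys e}"
  proof
    assume c: "is_st_cut E s t {e\<in>E. th < ys e}"
    show False
    proof (cases i)
      case 0
      then have "{e\<in>E. th < ys e} = {}" using le_th by force
      then show False using c Pmax_path by (auto simp: is_st_cut_def)
    next
      case (Suc j)
      have sub: "{e\<in>E. th < ys e} \<subseteq> {e \<in> E. ys e \<ge> ys (es ! j)}"
      proof
        fix e assume e: "e \<in> {e\<in>E. th < ys e}"
        have "\<exists>k<i. es ! k = e" using le_th[of e] e by force
        then obtain k where k: "k < i" "es ! k = e" by blast
        have "ys (es ! j) \<le> ys (es ! k)"
          using sorted_wrt_nth_less[OF es_sorted, of k j] k Suc i_range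
          by (cases "k = j") auto
        then show "e \<in> {e \<in> E. ys e \<ge> ys (es ! j)}" using e k by auto
      qed
      have "is_st_cut E s t {e \<in> E. ys e \<ge> ys (es ! j)}"
        using c sub unfolding is_st_cut_def by blast
      then show False using i_first Suc by auto
    qed
  qed
  then obtain p where p: "simple_st_path E s t p"
    and pe: "\<forall>e\<in>set (path_edges p). ys e \<le> th"
  proof -
    from notcut obtain q where "simple_st_path E s t q" "set (path_edges q) \<inter> {e\<in>E. th < ys e} = {}"
      unfolding is_st_cut_def by auto
    moreover then have "set (path_edges q) \<subseteq> E" by (simp add: simple_st_path_def)
    ultimately show ?thesis using that by force
  qed
  have pn: "p \<noteq> []" and pE: "set (path_edges p) \<subseteq> E" using p by (auto simp: simple_st_path_def)
  have fe: "\<forall>u v. (u,v)\<in>E \<longrightarrow> - xs u + xs v + ys (u, v) \<ge> 0" using opt_feas by (simp add: relax_feasible_def)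
  have "1 \<le> xs s - xs t" using opt_feas by (simp add: relax_feasible_def)
  also have "xs s - xs t \<le> sum_list (map ys (path_edges p))"
    using walk[OF pn pE fe] p by (simp add: simple_st_path_def)
  also have "\<dots> \<le> real (length (path_edges p)) * th" using sl_bound pe by blast
  finally have one: "1 \<le> real (length (path_edges p)) * th" .
  have th_pos: "0 < th"
  proof (rule ccontr)
    assume "\<not> 0 < th"
    then have "real (length (path_edges p)) * th \<le> 0" by (simp add: mult_nonneg_nonpos)
    with one show False by simp
  qed
  have "length (path_edges p) \<le> L"
    using Pmax_longest p diff_le_mono unfolding L_def path_edges_def by simp
  then have "real (length (path_edges p)) * th \<le> real L * th"
    using th_pos by (simp add: mult_right_mono)
  with one have oneL: "1 \<le> real L * th" by simp
  then have invL: "1 / th \<le> real L" using th_pos by (simp add: field_simps)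
  have part2: "(1 / th) * f Cstar \<le> real L * f Cstar" using mult_right_mono[OF invL fCs] .
  have Pn: "Pmax \<noteq> []" and Pd: "distinct Pmax" and PE: "set (path_edges Pmax) \<subseteq> E"
    using Pmax_path by (auto simp: simple_st_path_def)
  have "set Pmax \<subseteq> V"
  proof -
    have "set Pmax \<subseteq> insert (hd Pmax) (snd ` set (path_edges Pmax))" using set_path_sub[OF Pn] .
    moreover have "hd Pmax = s" using Pmax_path by (simp add: simple_st_path_def)
    moreover have "snd ` set (path_edges Pmax) \<subseteq> V" using PE EV by auto
    ultimately show ?thesis using sV by auto
  qed
  then have "card (set Pmax) \<le> card V" using finV card_mono by blast
  then have lP: "length Pmax \<le> card V" using distinct_card[OF Pd] by simp
  have Lp: "L = length Pmax - 1" unfolding L_def path_edges_def by simp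
  have "real L \<le> real (card V) - 1" using lP Pn Lp by (cases Pmax) auto
  then have part3: "real L * f Cstar \<le> (real (card V) - 1) * f Cstar" using fCs by (simp add: mult_right_mono)
  define Ci where "Ci = {e\<in>E. th \<le> ys e}"
  define Vs where "Vs = {v \<in> ys ` E. 0 < v}"
  define prev where "prev v = Max (insert 0 {w\<in>Vs. w<v})" for v
  have lov: "lovasz_ext E f ys = (\<Sum>v\<in>Vs. (v - prev v) * f {e\<in>E. v \<le> ys e})"
    by (simp add: lovasz_ext_def Vs_def prev_def Let_def)
  have finVs: "finite Vs" using finE unfolding Vs_def by simp
  have prev_lt: "prev v < v" if "v \<in> Vs" for v
  proof -
    have fi: "finite (insert 0 {w\<in>Vs. w<v})" using finVs by simp
    have ne: "insert 0 {w\<in>Vs. w<v} \<noteq> {}" by simp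
    have "\<forall>a\<in>insert 0 {w\<in>Vs. w<v}. a < v" using that unfolding Vs_def by auto
    then show ?thesis unfolding prev_def using Max_less_iff[OF fi ne] by blast
  qed
  have thVs: "th \<in> Vs" using esiE th_pos unfolding Vs_def th_def by auto
  have fsub: "0 \<le> f A" if "A \<subseteq> E" for A using f_nonneg that by (simp add: nonneg_on_def)
  have fmono: "f A \<le> f B" if "A \<subseteq> B" "B \<subseteq> E" for A B using f_mono that by (simp add: monotone_set_fun_def)
  have "th * f Ci = (\<Sum>v\<in>{v\<in>Vs. v\<le>th}. (v - prev v)) * f Ci"
    using tele[OF finVs _ thVs] unfolding prev_def Vs_def by simp
  also have "\<dots> = (\<Sum>v\<in>{v\<in>Vs. v\<le>th}. (v - prev v) * f Ci)" by (simp add: sum_distrib_right)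
  also have "\<dots> \<le> (\<Sum>v\<in>{v\<in>Vs. v\<le>th}. (v - prev v) * f {e\<in>E. v \<le> ys e})"
  proof (rule sum_mono)
    fix v assume v: "v \<in> {v\<in>Vs. v\<le>th}"
    have "f Ci \<le> f {e\<in>E. v \<le> ys e}" using v unfolding Ci_def by (intro fmono) auto
    moreover have "0 \<le> v - prev v" using prev_lt v by (simp add: less_imp_le)
    ultimately show "(v - prev v) * f Ci \<le> (v - prev v) * f {e\<in>E. v \<le> ys e}" by (simp add: mult_left_mono)
  qed
  also have "\<dots> \<le> (\<Sum>v\<in>Vs. (v - prev v) * f {e\<in>E. v \<le> ys e})"
  proof (rule sum_mono2[OF finVs])
    show "{v\<in>Vs. v\<le>th} \<subseteq> Vs" by auto
    fix v assume "v \<in> Vs - {v\<in>Vs. v\<le>th}"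
    then have "0 \<le> v - prev v" "0 \<le> f {e\<in>E. v \<le> ys e}" using prev_lt fsub by (auto simp: less_imp_le)
    then show "0 \<le> (v - prev v) * f {e\<in>E. v \<le> ys e}" by simp
  qed
  also have "\<dots> = lovasz_ext E f ys" using lov by simp
  finally have lov1: "th * f Ci \<le> lovasz_ext E f ys" .
  define yc where "yc e = (if e \<in> Cstar then 1 else (0::real))" for e
  define xc where "xc v = (if \<exists>q. simple_st_path (E - Cstar) s v q then 1 else (0::real))" for v
  have Cne: "Cstar \<noteq> {}" using Cstar_cut Pmax_path by (auto simp: is_st_cut_def)
  have yVs: "{v \<in> yc ` E. 0 < v} = {1}" using Cne CsE unfolding yc_def by force
  have "{e\<in>E. 1 \<le> yc e} = Cstar" using CsE unfolding yc_def by auto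
  moreover have "{w \<in> {1::real}. w < 1} = {}" by auto
  ultimately have lovc: "lovasz_ext E f yc = f Cstar" by (simp add: lovasz_ext_def yVs Let_def del: Collect_empty_eq)
  have xs1: "xc s = 1"
  proof -
    have "simple_st_path (E - Cstar) s s [s]" by (simp add: simple_st_path_def path_edges_def)
    then show ?thesis unfolding xc_def by auto
  qed
  have xt0: "xc t = 0"
  proof -
    have "\<not> simple_st_path (E - Cstar) s t q" for q
    proof
      assume q: "simple_st_path (E - Cstar) s t q"
      then have "simple_st_path E s t q" "set (path_edges q) \<inter> Cstar = {}" by (auto simp: simple_st_path_def)
      then show False using Cstar_cut by (auto simp: is_st_cut_def)
    qed
    then show ?thesis unfolding xc_def by auto
  qed
  have "relax_feasible E s t xc yc"
    unfolding relax_feasible_def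
  proof (intro conjI allI impI ballI)
    fix u v assume uv: "(u, v) \<in> E"
    show "- xc u + xc v + yc (u, v) \<ge> 0"
    proof (cases "(u,v) \<in> Cstar")
      case True then show ?thesis unfolding xc_def yc_def by auto
    next
      case nC: False
      show ?thesis
      proof (cases "\<exists>q. simple_st_path (E - Cstar) s u q")
        case True
        then obtain q where q: "simple_st_path (E - Cstar) s u q" by blast
        have "(u,v) \<in> E - Cstar" using uv nC by simp
        then have "\<exists>q. simple_st_path (E - Cstar) s v q" using extend_path[OF q] by blast
        then show ?thesis unfolding xc_def yc_def by auto
      next
        case False then show ?thesis unfolding xc_def yc_def by auto
      qed
    qed
  next
    show "xc s - xc t \<ge> 1" using xs1 xt0 by simp
  next
    fix e show "yc e \<ge> 0" unfolding yc_def by auto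
  qed
  then have "lovasz_ext E f ys \<le> lovasz_ext E f yc" using opt_min by blast
  then have "lovasz_ext E f ys \<le> f Cstar" using lovc by simp
  with lov1 have thCi: "th * f Ci \<le> f Cstar" by simp
  have "f Chat \<le> f Ci" using Chat_sub unfolding Ci_def th_def by (intro fmono) auto
  then have "th * f Chat \<le> f Cstar" using thCi th_pos mult_left_mono[of "f Chat" "f Ci" th] by linarith
  then have part1: "f Chat \<le> (1 / th) * f Cstar" using th_pos by (simp add: field_simps)
  show ?thesis using part1 part2 part3 unfolding th_def L_def by simp
qed

end
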